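(* Let $P$ be a finite poset, $\epsilon\in\{1,-1\}$, $\xi\in S^{(\epsilon)}$ and $d=\xi(-\infty)$. Then $T^\xi$ is not a generator of $\omega^{(\epsilon)}$ if and only if there is an antichain $A$ of $P$ (possibly empty) such that for every $C\in C_\xi^{[d-\epsilon]}$ we have $C\cap A\neq\emptyset$ and $\xi(a)>\epsilon$ for the unique element $a\in C\cap A$ (the condition holds trivially when $C_\xi^{[d-\epsilon]}=\emptyset$).
   Context: $P^-=P\cup\{-\infty\}$; $\xi^+(B)=\sum_{b\in B}\xi(b)$. $S^{(m)}=\{\xi\in\mathbb Z^{P^-}:\xi(x)\ge m\ \forall x\in P,\ \xi(-\infty)\ge\xi^+(C)+m$ for every maximal chain $C$ of $P\}$. $C_\xi^{[m]}$ is the set of maximal chains $C$ of $P$ with $\xi^+(C)=m$. $T^\xi=\prod_{x\in P^-}T_x^{\xi(x)}$, $\deg T^\xi=\xi(-\infty)$. $R=\mathbb K[\mathcal C(P)]=\bigoplus_{\xi\in S^{(0)}}\mathbb KT^\xi$ is the Ehrhart ring of the chain polytope, $\omega^{(1)}=\omega=\bigoplus_{\xi\in S^{(1)}}\mathbb KT^\xi$ its canonical ideal and $\omega^{(-1)}=R:\omega=\bigoplus_{\xi\in S^{(-1)}}\mathbb KT^\xi$ its anticanonical ideal. A Laurent monomial $T^\xi\in\omega^{(\epsilon)}$ is a generator of $\omega^{(\epsilon)}$ if it belongs to the (unique) minimal monomial generating set of the $R$-module $\omega^{(\epsilon)}$, i.e. it is not of the form $T^{\xi_1}T^{\xi_2}$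 with $\xi_1\in S^{(0)}$, $\xi_1(-\infty)>0$, $\xi_2\in S^{(\epsilon)}$. *)

theory Defs
  imports Main
begin

(* A finite poset is a finite carrier P with a partial order le on P.
   P^- = P \<union> {-\<infinity>} is modelled as 'a option: None = -\<infinity>, Some x = x \<in> P.
   Elements of \<int>^{P^-} are functions 'a option \<Rightarrow> int (only values on P^- matter). *)

definition is_poset :: "'a set \<Rightarrow> ('a \<Rightarrow> 'a \<Rightarrow> bool) \<Rightarrow> bool" where
  "is_poset P le \<longleftrightarrow>
     (\<forall>x\<in>P. le x x) \<and>
     (\<forall>x\<in>P. \<forall>y\<in>P. le x y \<and> le y x \<longrightarrow> x = y) \<and>
     (\<forall>x\<in>P. \<forall>y\<in>P. \<forall>z\<in>P. le x y \<and> le y z \<longrightarrow> le x z)"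

definition is_chain :: "'a set \<Rightarrow> ('a \<Rightarrow> 'a \<Rightarrow> bool) \<Rightarrow> 'a set \<Rightarrow> bool" where
  "is_chain P le C \<longleftrightarrow> C \<subseteq> P \<and> (\<forall>x\<in>C. \<forall>y\<in>C. le x y \<or> le y x)"

definition is_maximal_chain :: "'a set \<Rightarrow> ('a \<Rightarrow> 'a \<Rightarrow> bool) \<Rightarrow> 'a set \<Rightarrow> bool" where
  "is_maximal_chain P le C \<longleftrightarrow>
     is_chain P le C \<and> (\<forall>D. is_chain P le D \<and> C \<subseteq> D \<longrightarrow> D = C)"

definition is_antichain :: "'a set \<Rightarrow> ('a \<Rightarrow> 'a \<Rightarrow> bool) \<Rightarrow> 'a set \<Rightarrow> bool" where
  "is_antichain P le A \<longleftrightarrow> A \<subseteq> P \<and> (\<forall>x\<in>A. \<forall>y\<in>A. le x y \<longrightarrow> x = y)"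

definition xi_plus :: "('a option \<Rightarrow> int) \<Rightarrow> 'a set \<Rightarrow> int" where
  "xi_plus \<xi> B = (\<Sum>b\<in>B. \<xi> (Some b))"

definition S_set :: "'a set \<Rightarrow> ('a \<Rightarrow> 'a \<Rightarrow> bool) \<Rightarrow> int \<Rightarrow> ('a option \<Rightarrow> int) set" where
  "S_set P le m = {\<xi>. (\<forall>x\<in>P. \<xi> (Some x) \<ge> m) \<and>
      (\<forall>C. is_maximal_chain P le C \<longrightarrow> \<xi> None \<ge> xi_plus \<xi> C + m)}"

definition C_xi :: "'a set \<Rightarrow> ('a \<Rightarrow> 'a \<Rightarrow> bool) \<Rightarrow> ('a option \<Rightarrow> int) \<Rightarrow> int \<Rightarrow> 'a set set" where
  "C_xi P le \<xi> m = {C. is_maximal_chain P le C \<and> xi_plus \<xi> C = m}"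

(* T^\<xi> is a generator of \<omega>^{(\<epsilon>)}: T^\<xi> \<in> \<omega>^{(\<epsilon>)} and T^\<xi> is not T^{\<xi>1} T^{\<xi>2}
   with \<xi>1 \<in> S^{(0)}, \<xi>1(-\<infinity>) > 0, \<xi>2 \<in> S^{(\<epsilon>)} (equality of exponents on P^-). *)
definition is_generator :: "'a set \<Rightarrow> ('a \<Rightarrow> 'a \<Rightarrow> bool) \<Rightarrow> int \<Rightarrow> ('a option \<Rightarrow> int) \<Rightarrow> bool" where
  "is_generator P le \<epsilon> \<xi> \<longleftrightarrow> \<xi> \<in> S_set P le \<epsilon> \<and>
     \<not> (\<exists>\<xi>1 \<xi>2. \<xi>1 \<in> S_set P le 0 \<and> \<xi>1 None > 0 \<and> \<xi>2 \<in> S_set P le \<epsilon> \<and>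
            \<xi> None = \<xi>1 None + \<xi>2 None \<and>
            (\<forall>x\<in>P. \<xi> (Some x) = \<xi>1 (Some x) + \<xi>2 (Some x)))"

end

theory Submission
  imports Defs
begin

lemma min_exists:
  assumes "finite S" "S \<noteq> {}" "S \<subseteq> P"
    and antis: "\<forall>x\<in>P. \<forall>y\<in>P. le x y \<and> le y x \<longrightarrow> x = y"
    and trans: "\<forall>x\<in>P. \<forall>y\<in>P. \<forall>z\<in>P. le x y \<and> le y z \<longrightarrow> le x z"
  shows "\<exists>m\<in>S. \<forall>y\<in>S. le y m \<longrightarrow> y = m"
  using assms(1,2,3)
proof (induction S rule: finite_induct)
  case empty then show ?case by simp
next
  case (insert x S)
  show ?case
  proof (cases "S = {}")
    case True then show ?thesis by auto
  next
    case False
    then obtain m where m: "m \<in> S" "\<forall>y\<in>S. le y m \<longrightarrow> y = m"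
      using insert by auto
    show ?thesis
    proof (cases "le x m \<and> x \<noteq> m")
      case True
      have "\<forall>y\<in>insert x S. le y x \<longrightarrow> y = x"
      proof (intro ballI impI)
        fix y assume y: "y \<in> insert x S" "le y x"
        show "y = x"
        proof (rule ccontr)
          assume "y \<noteq> x"
          then have "y \<in> S" using y by auto
          then have "le y m" using trans y True m insert.prems by blast
          then have "y = m" using m \<open>y \<in> S\<close> by blast
          then show False using antis y True m insert.prems \<open>y \<in> S\<close> by blast
        qed
      qed
      then show ?thesis by blast
    next
      case False
      then show ?thesis using m by blast
    qed
  qed
qed

lemma max_chain_exists:
  assumes "finite P" "is_chain P le D0"
  shows "\<exists>M. is_maximal_chain P le M \<and> D0 \<subseteq> M"
proof -
  define X where "X = {D. is_chain P le D \<and> D0 \<subseteq> D}"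
  have "X \<subseteq> Pow P" by (auto simp: is_chain_def X_def)
  then have fX: "finite X" using assms(1) by (meson finite_Pow_iff finite_subset)
  have "X \<noteq> {}" using assms(2) X_def by blast
  from finite_has_maximal[OF fX this] obtain M where M: "M \<in> X" "\<forall>b\<in>X. M \<le> b \<longrightarrow> M = b"
    by blast
  have "is_maximal_chain P le M" unfolding is_maximal_chain_def
  proof (intro conjI allI impI)
    show "is_chain P le M" using M(1) X_def by simp
  next
    fix D assume D: "is_chain P le D \<and> M \<subseteq> D"
    then have "D \<in> X" using M(1) X_def by auto
    then show "D = M" using M(2) D by blast
  qed
  then show ?thesis using M(1) X_def by auto
qed

theorem mainTheorem7:
  fixes P :: "'a set" and le :: "'a \<Rightarrow> 'a \<Rightarrow> bool"
    and \<epsilon> :: int and \<xi> :: "'a option \<Rightarrow> int" and d :: int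
  assumes "finite P" and "is_poset P le"
    and "\<epsilon> \<in> {1, -1}"
    and "\<xi> \<in> S_set P le \<epsilon>"
    and "d = \<xi> None"
  shows "\<not> is_generator P le \<epsilon> \<xi> \<longleftrightarrow>
    (\<exists>A. is_antichain P le A \<and>
       (\<forall>C\<in>C_xi P le \<xi> (d - \<epsilon>). C \<inter> A \<noteq> {} \<and> (\<forall>a\<in>C \<inter> A. \<xi> (Some a) > \<epsilon>)))"
proof
  have refl: "\<forall>x\<in>P. le x x"
    using assms(2) unfolding is_poset_def by (rule conjunct1)
  have antis: "\<forall>x\<in>P. \<forall>y\<in>P. le x y \<and> le y x \<longrightarrow> x = y"
    using assms(2) unfolding is_poset_def by (rule conjunct1[OF conjunct2])
  have trans: "\<forall>x\<in>P. \<forall>y\<in>P. \<forall>z\<in>P. le x y \<and> le y z \<longrightarrow> le x z"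
    using assms(2) unfolding is_poset_def by (rule conjunct2[OF conjunct2])
  have xiS: "\<forall>x\<in>P. \<xi> (Some x) \<ge> \<epsilon>" "\<forall>C. is_maximal_chain P le C \<longrightarrow> \<xi> None \<ge> xi_plus \<xi> C + \<epsilon>"
    using assms(4) unfolding S_set_def by auto
  assume "\<not> is_generator P le \<epsilon> \<xi>"
  then obtain \<xi>1 \<xi>2 where d: "\<xi>1 \<in> S_set P le 0" "\<xi>1 None > 0" "\<xi>2 \<in> S_set P le \<epsilon>"
     "\<xi> None = \<xi>1 None + \<xi>2 None" "\<forall>x\<in>P. \<xi> (Some x) = \<xi>1 (Some x) + \<xi>2 (Some x)"
    using assms(4) unfolding is_generator_def by blast
  have s1: "\<forall>x\<in>P. \<xi>1 (Some x) \<ge> 0" "\<forall>C. is_maximal_chain P le C \<longrightarrow> \<xi>1 None \<ge> xi_plus \<xi>1 C"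
    using d(1) unfolding S_set_def by auto
  have s2: "\<forall>x\<in>P. \<xi>2 (Some x) \<ge> \<epsilon>" "\<forall>C. is_maximal_chain P le C \<longrightarrow> \<xi>2 None \<ge> xi_plus \<xi>2 C + \<epsilon>"
    using d(3) unfolding S_set_def by auto
  define A where "A = {a\<in>P. \<xi>1 (Some a) > 0 \<and> (\<forall>y\<in>P. \<xi>1 (Some y) > 0 \<and> le y a \<longrightarrow> y = a)}"
  have "is_antichain P le A" unfolding is_antichain_def A_def by auto
  moreover have "\<forall>C\<in>C_xi P le \<xi> (d - \<epsilon>). C \<inter> A \<noteq> {} \<and> (\<forall>a\<in>C \<inter> A. \<xi> (Some a) > \<epsilon>)"
  proof
    fix C assume "C \<in> C_xi P le \<xi> (d - \<epsilon>)"
    then have C: "is_maximal_chain P le C" "xi_plus \<xi> C = d - \<epsilon>" unfolding C_xi_def by auto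
    have CP: "C \<subseteq> P" using C(1) unfolding is_maximal_chain_def is_chain_def by auto
    have fC: "finite C" using CP assms(1) finite_subset by blast
    have "xi_plus \<xi> C = xi_plus \<xi>1 C + xi_plus \<xi>2 C"
      unfolding xi_plus_def sum.distrib[symmetric] using CP d(5) by (intro sum.cong) auto
    then have tight: "xi_plus \<xi>1 C = \<xi>1 None"
      using s1(2) s2(2) C d(4) assms(5) by force
    let ?S = "{z\<in>C. \<xi>1 (Some z) > 0}"
    have "?S \<noteq> {}"
    proof
      assume "?S = {}"
      then have "\<forall>z\<in>C. \<xi>1 (Some z) = 0" using s1(1) CP by force
      then have "xi_plus \<xi>1 C = 0" unfolding xi_plus_def by simp
      then show False using tight d(2) by simp
    qed
    moreover have "finite ?S" using fC by simp
    moreover have "?S \<subseteq> P" using CP by blast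
    ultimately obtain c where c: "c \<in> ?S" "\<forall>y\<in>?S. le y c \<longrightarrow> y = c"
      using min_exists[of ?S P le, OF _ _ _ antis trans] by blast
    have "c \<in> A"
    proof -
      have "\<forall>y\<in>P. \<xi>1 (Some y) > 0 \<and> le y c \<longrightarrow> y = c"
      proof (intro ballI impI)
        fix y assume y: "y \<in> P" "\<xi>1 (Some y) > 0 \<and> le y c"
        show "y = c"
        proof (cases "y \<in> C")
          case True then show ?thesis using c y by blast
        next
          case False
          let ?U = "{z\<in>C. le c z}"
          have chC: "\<forall>x\<in>C. \<forall>y\<in>C. le x y \<or> le y x"
            using C(1) unfolding is_maximal_chain_def is_chain_def by auto
          have "is_chain P le (insert y ?U)"
            unfolding is_chain_def
          proof (intro conjI ballI)
            show "insert y ?U \<subseteq> P" using y CP by auto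
          next
            fix u v assume uv: "u \<in> insert y ?U" "v \<in> insert y ?U"
            have cP: "c \<in> P" using c CP by auto
            have yle: "\<And>z. z \<in> ?U \<Longrightarrow> le y z" using trans y cP CP by blast
            show "le u v \<or> le v u"
            proof -
              have "y \<in> P" using y by simp
              then have "le y y" using refl by blast
              moreover have "\<forall>x\<in>?U. \<forall>y\<in>?U. le x y \<or> le y x" using chC by blast
              ultimately show ?thesis using uv yle by blast
            qed
          qed
          then obtain M where M: "is_maximal_chain P le M" "insert y ?U \<subseteq> M"
            using max_chain_exists assms(1) by blast
          have MP: "M \<subseteq> P" using M(1) unfolding is_maximal_chain_def is_chain_def by auto
          have fM: "finite M" using MP assms(1) finite_subset by blast
          have "xi_plus \<xi>1 (insert y ?U) \<le> xi_plus \<xi>1 M"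
            unfolding xi_plus_def using M(2) MP s1(1) fM
            by (intro sum_mono2) auto
          moreover have "xi_plus \<xi>1 (insert y ?U) = \<xi>1 (Some y) + xi_plus \<xi>1 ?U"
            unfolding xi_plus_def using False fC by simp
          moreover have "xi_plus \<xi>1 ?U = xi_plus \<xi>1 C"
          proof -
            have "\<forall>z\<in>C - ?U. \<xi>1 (Some z) = 0"
            proof
              fix z assume z: "z \<in> C - ?U"
              have "le z c" using z chC c by auto
              moreover have "z \<noteq> c" proof
                assume "z = c"
                then have "le c z" using refl c(1) CP by blast
                then show False using z by blast
              qed
              ultimately have "\<not> \<xi>1 (Some z) > 0" using c(2) z by auto
              then show "\<xi>1 (Some z) = 0" using s1(1) z CP by force
            qed
            then have "sum (\<lambda>z. \<xi>1 (Some z)) (C - ?U) = 0" by simp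
            moreover have "?U \<subseteq> C" by blast
            note sum.subset_diff[OF this fC, of "\<lambda>z. \<xi>1 (Some z)"]
            ultimately show ?thesis unfolding xi_plus_def by simp
          qed
          ultimately have "xi_plus \<xi>1 M > \<xi>1 None" using tight y by linarith
          moreover have "\<xi>1 None \<ge> xi_plus \<xi>1 M" using s1(2) M(1) by blast
          ultimately show ?thesis by linarith
        qed
      qed
      then show ?thesis unfolding A_def using c CP by auto
    qed
    moreover have "\<forall>a\<in>C \<inter> A. \<xi> (Some a) > \<epsilon>"
      using d(5) s2(1) unfolding A_def by force
    ultimately show "C \<inter> A \<noteq> {} \<and> (\<forall>a\<in>C \<inter> A. \<xi> (Some a) > \<epsilon>)" using c by blast
  qed
  ultimately show "\<exists>A. is_antichain P le A \<and>
       (\<forall>C\<in>C_xi P le \<xi> (d - \<epsilon>). C \<inter> A \<noteq> {} \<and> (\<forall>a\<in>C \<inter> A. \<xi> (Some a) > \<epsilon>))" by blast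
next
  have xiS: "\<forall>x\<in>P. \<xi> (Some x) \<ge> \<epsilon>" "\<forall>C. is_maximal_chain P le C \<longrightarrow> \<xi> None \<ge> xi_plus \<xi> C + \<epsilon>"
    using assms(4) unfolding S_set_def by auto
  assume "\<exists>A. is_antichain P le A \<and>
       (\<forall>C\<in>C_xi P le \<xi> (d - \<epsilon>). C \<inter> A \<noteq> {} \<and> (\<forall>a\<in>C \<inter> A. \<xi> (Some a) > \<epsilon>))"
  then obtain A0 where A0: "is_antichain P le A0"
    "\<forall>C\<in>C_xi P le \<xi> (d - \<epsilon>). C \<inter> A0 \<noteq> {} \<and> (\<forall>a\<in>C \<inter> A0. \<xi> (Some a) > \<epsilon>)" by blast
  define A where "A = {a\<in>A0. \<xi> (Some a) > \<epsilon>}"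
  have AP: "A \<subseteq> P" using A0(1) unfolding A_def is_antichain_def by auto
  have anti: "\<forall>x\<in>A. \<forall>y\<in>A. le x y \<longrightarrow> x = y" using A0(1) unfolding A_def is_antichain_def by auto
  define \<xi>1 :: "'a option \<Rightarrow> int" where
    "\<xi>1 = (\<lambda>u. case u of None \<Rightarrow> 1 | Some x \<Rightarrow> if x \<in> A then 1 else 0)"
  define \<xi>2 where "\<xi>2 = (\<lambda>u. \<xi> u - \<xi>1 u)"
  have card1: "xi_plus \<xi>1 C = int (card (C \<inter> A))" "card (C \<inter> A) \<le> 1"
    if C: "is_maximal_chain P le C" for C
  proof -
    have CP: "C \<subseteq> P" using C unfolding is_maximal_chain_def is_chain_def by auto
    have fC: "finite C" using CP assms(1) finite_subset by blast
    have "xi_plus \<xi>1 C = (\<Sum>b\<in>C. if b \<in> A then 1 else 0)"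
      unfolding xi_plus_def \<xi>1_def by simp
    also have "\<dots> = int (card (C \<inter> A))"
      using fC by (simp add: sum.If_cases)
    finally show "xi_plus \<xi>1 C = int (card (C \<inter> A))" .
    have chC: "\<forall>x\<in>C. \<forall>y\<in>C. le x y \<or> le y x"
      using C unfolding is_maximal_chain_def is_chain_def by auto
    have "\<forall>x\<in>C \<inter> A. \<forall>y\<in>C \<inter> A. x = y" using chC anti by blast
    then show "card (C \<inter> A) \<le> 1" using fC
      by (metis card_le_Suc0_iff_eq finite_Int One_nat_def)
  qed
  have "\<xi>1 \<in> S_set P le 0"
    unfolding S_set_def using card1 by (auto simp: \<xi>1_def)
  moreover have "\<xi>1 None > 0" by (simp add: \<xi>1_def)
  moreover have "\<xi>2 \<in> S_set P le \<epsilon>"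
    unfolding S_set_def
  proof (intro CollectI conjI allI impI ballI)
    fix x assume "x \<in> P"
    then show "\<xi>2 (Some x) \<ge> \<epsilon>" using xiS(1) unfolding \<xi>2_def \<xi>1_def A_def by auto
  next
    fix C assume C: "is_maximal_chain P le C"
    have CP: "C \<subseteq> P" using C unfolding is_maximal_chain_def is_chain_def by auto
    have x2: "xi_plus \<xi>2 C = xi_plus \<xi> C - xi_plus \<xi>1 C"
      unfolding xi_plus_def \<xi>2_def by (simp add: sum_subtractf)
    show "\<xi>2 None \<ge> xi_plus \<xi>2 C + \<epsilon>"
    proof (cases "xi_plus \<xi> C = d - \<epsilon>")
      case True
      then have "C \<in> C_xi P le \<xi> (d - \<epsilon>)" using C unfolding C_xi_def by auto
      then have "C \<inter> A \<noteq> {}" using A0(2) unfolding A_def by auto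
      then have "card (C \<inter> A) = 1" using card1(2)[OF C] CP assms(1)
        by (metis One_nat_def card_0_eq finite_Int finite_subset le_Suc_eq le_zero_eq)
      then show ?thesis using x2 True card1(1)[OF C] assms(5) by (simp add: \<xi>2_def \<xi>1_def)
    next
      case False
      then have "xi_plus \<xi> C \<le> d - \<epsilon> - 1" using xiS(2) C assms(5) by force
      then show ?thesis using x2 card1(1)[OF C] assms(5) by (simp add: \<xi>2_def \<xi>1_def)
    qed
  qed
  moreover have "\<xi> None = \<xi>1 None + \<xi>2 None" "\<forall>x\<in>P. \<xi> (Some x) = \<xi>1 (Some x) + \<xi>2 (Some x)"
    by (auto simp: \<xi>2_def)
  ultimately show "\<not> is_generator P le \<epsilon> \<xi>" unfolding is_generator_def by blast
qed

end
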